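(* Let $2\le g<h$. Then for every self-adjoint tuple $X\in SM_n(\mathbb C)^g$, $X\in\mathcal D_{F^{[g]}}$ if and only if $(X,0)\in\mathcal D_{F^{[h]}}$ (with $0$ the zero tuple of length $h-g$). Moreover $\mathcal P_g\mathcal D_{F^{[h]}}=\mathcal D_{F^{[g]}}$.
   Context: $F^{[g]}$ is defined recursively: $F^{[2]}=(\sigma_z,\sigma_x)$ with $\sigma_z=\begin{bmatrix}1&0\\0&-1\end{bmatrix}$, $\sigma_x=\begin{bmatrix}0&1\\1&0\end{bmatrix}$, and if $F^{[g]}=(F_1,\dots,F_g)$ then $F^{[g+1]}=(F_1\otimes\sigma_z,\dots,F_g\otimes\sigma_z,I\otimes\sigma_x)$. For a self-adjoint matrix tuple $A$, $\mathcal D_A=\bigcup_n\{X\in SM_n(\mathbb C)^g: I-\sum_i A_i\otimes X_i\succeq0\}$. For a set $K$ of $h$-tuples of self-adjoint matrices and $g<h$, the coordinate projection $\mathcal P_gK$ is the set of $X\in SM_n^g$ (any $n$) for which there is $Y\in SM_n^{h-g}$ with $(X,Y)\in K$. *)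

theory Defs
  imports Complex_Main "Jordan_Normal_Form.Matrix"
begin

text \<open>Kronecker product: entry ((i1,i2),(j1,j2)) is A(i1,j1) * B(i2,j2),
  with row index i = i1 * dim_row B + i2 (and similarly for columns).\<close>
definition kron :: "complex mat \<Rightarrow> complex mat \<Rightarrow> complex mat" where
  "kron A B = mat (dim_row A * dim_row B) (dim_col A * dim_col B)
     (\<lambda>(i,j). A $$ (i div dim_row B, j div dim_col B) * B $$ (i mod dim_row B, j mod dim_col B))"

definition self_adjoint :: "complex mat \<Rightarrow> bool" where
  "self_adjoint A \<longleftrightarrow> dim_row A = dim_col A \<and>
     (\<forall>i < dim_row A. \<forall>j < dim_row A. A $$ (i,j) = cnj (A $$ (j,i)))"

definition psd :: "complex mat \<Rightarrow> bool" where
  "psd A \<longleftrightarrow> self_adjoint A \<and>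
     (\<forall>v. dim_vec v = dim_row A \<longrightarrow>
        0 \<le> Re (\<Sum>i<dim_row A. \<Sum>j<dim_row A. cnj (v $ i) * A $$ (i,j) * v $ j))"

definition sigma_z :: "complex mat" where
  "sigma_z = mat_of_rows_list 2 [[1, 0], [0, -1]]"

definition sigma_x :: "complex mat" where
  "sigma_x = mat_of_rows_list 2 [[0, 1], [1, 0]]"

text \<open>F g = F^{[g]} for g \<ge> 2 (values for g < 2 are irrelevant).\<close>
fun F :: "nat \<Rightarrow> complex mat list" where
  "F 0 = []"
| "F (Suc 0) = []"
| "F (Suc (Suc 0)) = [sigma_z, sigma_x]"
| "F (Suc (Suc (Suc g))) =
     (let Fs = F (Suc (Suc g)) in
      map (\<lambda>M. kron M sigma_z) Fs @ [kron (1\<^sub>m (dim_row (hd Fs))) sigma_x])"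

definition SM_tuple :: "nat \<Rightarrow> nat \<Rightarrow> complex mat list \<Rightarrow> bool" where
  "SM_tuple n g X \<longleftrightarrow> length X = g \<and> (\<forall>M \<in> set X. M \<in> carrier_mat n n \<and> self_adjoint M)"

definition pencil :: "complex mat list \<Rightarrow> nat \<Rightarrow> complex mat list \<Rightarrow> complex mat" where
  "pencil A n X = (let d = dim_row (hd A) in
     1\<^sub>m (d * n) - foldr (+) (map2 kron A X) (0\<^sub>m (d * n) (d * n)))"

definition freeSpec :: "complex mat list \<Rightarrow> complex mat list set" where
  "freeSpec A = (\<Union>n. {X. SM_tuple n (length A) X \<and> psd (pencil A n X)})"

definition proj :: "nat \<Rightarrow> nat \<Rightarrow> complex mat list set \<Rightarrow> complex mat list set" where
  "proj g h K = {X. \<exists>n Y. SM_tuple n g X \<and> SM_tuple n (h - g) Y \<and> X @ Y \<in> K}"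

end

theory Submission
  imports Defs
begin

lemma kron_dims[simp]: "dim_row (kron A B) = dim_row A * dim_row B" "dim_col (kron A B) = dim_col A * dim_col B"
  by (simp_all add: kron_def)

lemma kron_index: "i < dim_row A * dim_row B \<Longrightarrow> j < dim_col A * dim_col B \<Longrightarrow>
  kron A B $$ (i,j) = A $$ (i div dim_row B, j div dim_col B) * B $$ (i mod dim_row B, j mod dim_col B)"
  by (simp add: kron_def)

lemma sigma_dims[simp]: "dim_row sigma_z = 2" "dim_col sigma_z = 2" "dim_row sigma_x = 2" "dim_col sigma_x = 2"
  by (simp_all add: sigma_z_def sigma_x_def mat_of_rows_list_def)

lemma sigma_carrier: "sigma_z \<in> carrier_mat 2 2" "sigma_x \<in> carrier_mat 2 2"
  by (rule carrier_matI, simp, simp)+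

lemma sigma_z_index: "s < 2 \<Longrightarrow> s' < 2 \<Longrightarrow>
  sigma_z $$ (s,s') = (if s = s' then (if s = 0 then 1 else -1) else 0)"
  by (cases s; cases s') (auto simp: sigma_z_def mat_of_rows_list_def less_Suc_eq)

lemma sigma_x_index: "s < 2 \<Longrightarrow> s' < 2 \<Longrightarrow>
  sigma_x $$ (s,s') = (if s = s' then 0 else 1)"
  by (cases s; cases s') (auto simp: sigma_x_def mat_of_rows_list_def less_Suc_eq)

lemma F_step: "2 \<le> m \<Longrightarrow> F (Suc m) = map (\<lambda>M. kron M sigma_z) (F m) @ [kron (1\<^sub>m (dim_row (hd (F m)))) sigma_x]"
  by (cases m rule: F.cases) (auto simp: Let_def)

lemma F_props: "2 \<le> m \<Longrightarrow> length (F m) = m \<and> F m \<noteq> [] \<and>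
   (\<forall>M\<in>set (F m). M \<in> carrier_mat (2^(m-1)) (2^(m-1)) \<and> self_adjoint M)"
proof (induction m rule: dec_induct)
  case base
  show ?case
    by (auto simp: sigma_z_def sigma_x_def mat_of_rows_list_def self_adjoint_def less_Suc_eq numeral_2_eq_2)
next
  case (step m)
  then have hd: "dim_row (hd (F m)) = 2^(m-1)" by (cases "F m") auto
  have sz: "self_adjoint sigma_z" "self_adjoint sigma_x"
    by (auto simp: self_adjoint_def sigma_z_index sigma_x_index)
  have ka: "self_adjoint (kron A B)" if "self_adjoint A" "self_adjoint B" for A B
  proof -
    have A: "dim_row A = dim_col A" "\<And>i j. i < dim_row A \<Longrightarrow> j < dim_row A \<Longrightarrow> A $$ (i, j) = cnj (A $$ (j, i))"
      using that(1) unfolding self_adjoint_def by blast+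
    have B: "dim_row B = dim_col B" "\<And>i j. i < dim_row B \<Longrightarrow> j < dim_row B \<Longrightarrow> B $$ (i, j) = cnj (B $$ (j, i))"
      using that(2) unfolding self_adjoint_def by blast+
    show ?thesis unfolding self_adjoint_def
    proof (intro conjI allI impI)
      show "dim_row (kron A B) = dim_col (kron A B)" using A B by simp
      fix i j assume *: "i < dim_row (kron A B)" "j < dim_row (kron A B)"
      then have "dim_row B > 0" by (cases "dim_row B") auto
      moreover have "i div dim_row B < dim_row A" "j div dim_row B < dim_row A"
        using * by (auto simp: less_mult_imp_div_less)
      moreover have "i mod dim_row B < dim_row B" "j mod dim_row B < dim_row B" using calculation by auto
      ultimately show "kron A B $$ (i, j) = cnj (kron A B $$ (j, i))"
        using * A(1) B(1) A(2)[of "i div dim_row B" "j div dim_row B"] B(2)[of "i mod dim_row B" "j mod dim_row B"]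
        by (simp add: kron_index)
    qed
  qed
  have p: "2^(Suc m - 1) = 2^(m-1)*(2::nat)" using step(1) by (cases m) auto
  have "\<forall>M\<in>set (F (Suc m)). M \<in> carrier_mat (2^(Suc m-1)) (2^(Suc m-1)) \<and> self_adjoint M"
  proof
    fix M assume "M \<in> set (F (Suc m))"
    then consider (a) A where "A \<in> set (F m)" "M = kron A sigma_z" | (b) "M = kron (1\<^sub>m (2^(m-1))) sigma_x"
      using F_step[OF step(1)] hd by auto
    then show "M \<in> carrier_mat (2^(Suc m-1)) (2^(Suc m-1)) \<and> self_adjoint M"
    proof cases
      case a
      have "A \<in> carrier_mat (2^(m-1)) (2^(m-1))" "self_adjoint A" using a(1) step(3) by auto
      have "M \<in> carrier_mat (2^(m-1)*2) (2^(m-1)*2)"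
        using a(2) \<open>A \<in> carrier_mat _ _\<close> by (auto simp del: mult_2_right power_Suc)
      then show ?thesis unfolding p using a(2) sz ka \<open>self_adjoint A\<close> by blast
    next
      case b
      have "self_adjoint (1\<^sub>m (2^(m-1)) :: complex mat)" by (auto simp: self_adjoint_def)
      moreover have "M \<in> carrier_mat (2^(m-1)*2) (2^(m-1)*2)"
        using b by (auto simp del: mult_2_right power_Suc)
      ultimately show ?thesis unfolding p using b sz ka by blast
    qed
  qed
  moreover have "length (F (Suc m)) = Suc m" using step(3) unfolding F_step[OF step(1)] by simp
  moreover have "F (Suc m) \<noteq> []" unfolding F_step[OF step(1)] by simp
  ultimately show ?case by blast
qed


lemma sa_entry: "self_adjoint M \<Longrightarrow> M \<in> carrier_mat k k \<Longrightarrow> i < k \<Longrightarrow> j < k \<Longrightarrow> M $$ (i,j) = cnj (M $$ (j,i))"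
  unfolding self_adjoint_def carrier_mat_def by blast

definition Sfun :: "complex mat list \<Rightarrow> complex mat list \<Rightarrow> nat \<Rightarrow> nat \<Rightarrow> nat \<Rightarrow> complex" where
  "Sfun A X n R R' = (\<Sum>i<length A. A!i $$ (R div n, R' div n) * X!i $$ (R mod n, R' mod n))"

definition Qf :: "nat \<Rightarrow> (nat \<Rightarrow> nat \<Rightarrow> complex) \<Rightarrow> (nat \<Rightarrow> complex) \<Rightarrow> complex" where
  "Qf N K f = (\<Sum>i<N. \<Sum>j<N. cnj (f i) * K i j * f j)"

lemma foldr_kron:
  assumes "length A = length X" "\<forall>M\<in>set A. M \<in> carrier_mat d d" "\<forall>M\<in>set X. M \<in> carrier_mat n n"
  shows "foldr (+) (map2 kron A X) (0\<^sub>m (d*n) (d*n)) \<in> carrier_mat (d*n) (d*n) \<and>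
    (\<forall>R<d*n. \<forall>R'<d*n. foldr (+) (map2 kron A X) (0\<^sub>m (d*n) (d*n)) $$ (R,R') = Sfun A X n R R')"
  using assms
proof (induction A X rule: list_induct2)
  case Nil then show ?case by (auto simp: Sfun_def)
next
  case (Cons a A x X)
  let ?T = "foldr (+) (map2 kron A X) (0\<^sub>m (d*n) (d*n))"
  have IH: "?T \<in> carrier_mat (d*n) (d*n)" "\<And>R R'. R < d*n \<Longrightarrow> R' < d*n \<Longrightarrow> ?T $$ (R,R') = Sfun A X n R R'"
    using Cons by auto
  have a: "a \<in> carrier_mat d d" and x: "x \<in> carrier_mat n n" using Cons by auto
  have eq: "foldr (+) (map2 kron (a#A) (x#X)) (0\<^sub>m (d*n) (d*n)) = kron a x + ?T" by simp
  show ?case unfolding eq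
  proof (intro conjI allI impI)
    show "kron a x + ?T \<in> carrier_mat (d*n) (d*n)" using IH(1) by auto
    fix R R' assume R: "R < d*n" "R' < d*n"
    have "(kron a x + ?T) $$ (R,R') = kron a x $$ (R,R') + Sfun A X n R R'"
      using IH R by auto
    also have "kron a x $$ (R,R') = a $$ (R div n, R' div n) * x $$ (R mod n, R' mod n)"
      using a x R by (simp add: kron_index)
    finally show "(kron a x + ?T) $$ (R,R') = Sfun (a#A) (x#X) n R R'"
      unfolding Sfun_def by (simp del: sum.lessThan_Suc add: sum.lessThan_Suc_shift)
  qed
qed

lemma pencil_index:
  assumes "A \<noteq> []" "length A = length X" "\<forall>M\<in>set A. M \<in> carrier_mat d d" "\<forall>M\<in>set X. M \<in> carrier_mat n n"
  shows "pencil A n X \<in> carrier_mat (d*n) (d*n)"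
    "\<And>R R'. R < d*n \<Longrightarrow> R' < d*n \<Longrightarrow> pencil A n X $$ (R,R') = (if R = R' then 1 else 0) - Sfun A X n R R'"
proof -
  have d: "dim_row (hd A) = d" using assms(1,3) by (cases A) auto
  note fk = foldr_kron[OF assms(2-4)]
  show "pencil A n X \<in> carrier_mat (d*n) (d*n)" unfolding pencil_def Let_def d using fk by auto
  fix R R' assume "R < d*n" "R' < d*n"
  then show "pencil A n X $$ (R,R') = (if R = R' then 1 else 0) - Sfun A X n R R'"
    unfolding pencil_def Let_def d using fk by auto
qed

lemma psd_Qf: "psd M \<longleftrightarrow> self_adjoint M \<and> (\<forall>f. 0 \<le> Re (Qf (dim_row M) (\<lambda>i j. M $$ (i,j)) f))"
proof -
  have "(\<forall>v. dim_vec v = dim_row M \<longrightarrow> 0 \<le> Re (\<Sum>i<dim_row M. \<Sum>j<dim_row M. cnj (v $ i) * M $$ (i,j) * v $ j))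
     \<longleftrightarrow> (\<forall>f. 0 \<le> Re (Qf (dim_row M) (\<lambda>i j. M $$ (i,j)) f))"
  proof
    assume H: "\<forall>v. dim_vec v = dim_row M \<longrightarrow> 0 \<le> Re (\<Sum>i<dim_row M. \<Sum>j<dim_row M. cnj (v $ i) * M $$ (i,j) * v $ j)"
    show "\<forall>f. 0 \<le> Re (Qf (dim_row M) (\<lambda>i j. M $$ (i,j)) f)"
    proof
      fix f
      have "0 \<le> Re (\<Sum>i<dim_row M. \<Sum>j<dim_row M. cnj (vec (dim_row M) f $ i) * M $$ (i,j) * vec (dim_row M) f $ j)"
        using H[rule_format, of "vec (dim_row M) f"] by simp
      also have "(\<Sum>i<dim_row M. \<Sum>j<dim_row M. cnj (vec (dim_row M) f $ i) * M $$ (i,j) * vec (dim_row M) f $ j)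
         = Qf (dim_row M) (\<lambda>i j. M $$ (i,j)) f" unfolding Qf_def by (intro sum.cong) auto
      finally show "0 \<le> Re (Qf (dim_row M) (\<lambda>i j. M $$ (i,j)) f)" .
    qed
  next
    assume H: "\<forall>f. 0 \<le> Re (Qf (dim_row M) (\<lambda>i j. M $$ (i,j)) f)"
    show "\<forall>v. dim_vec v = dim_row M \<longrightarrow> 0 \<le> Re (\<Sum>i<dim_row M. \<Sum>j<dim_row M. cnj (v $ i) * M $$ (i,j) * v $ j)"
    proof (intro allI impI)
      fix v :: "complex vec"
      show "0 \<le> Re (\<Sum>i<dim_row M. \<Sum>j<dim_row M. cnj (v $ i) * M $$ (i,j) * v $ j)"
        using spec[OF H, of "\<lambda>i. v $ i"] unfolding Qf_def by simp
    qed
  qed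
  then show ?thesis unfolding psd_def by blast
qed

lemma pencil_sa:
  assumes "A \<noteq> []" "length A = length X" "\<forall>M\<in>set A. M \<in> carrier_mat d d \<and> self_adjoint M"
    "\<forall>M\<in>set X. M \<in> carrier_mat n n \<and> self_adjoint M"
  shows "self_adjoint (pencil A n X)"
proof -
  note P = pencil_index[OF assms(1,2), of d n]
  have c: "pencil A n X \<in> carrier_mat (d*n) (d*n)" using P assms by auto
  have e: "\<And>R R'. R < d*n \<Longrightarrow> R' < d*n \<Longrightarrow> pencil A n X $$ (R,R') = (if R = R' then 1 else 0) - Sfun A X n R R'"
    using P assms by auto
  have S: "Sfun A X n R R' = cnj (Sfun A X n R' R)" if R: "R < d*n" "R' < d*n" for R R'
  proof -
    have n: "n > 0" using R by (cases n) auto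
    have b: "R div n < d" "R' div n < d" "R mod n < n" "R' mod n < n"
      using R n by (auto simp: less_mult_imp_div_less)
    show ?thesis unfolding Sfun_def cnj_sum
    proof (intro sum.cong refl)
      fix i assume "i \<in> {..<length A}"
      then have i: "A!i \<in> set A" "X!i \<in> set X" using assms(2) by auto
      have sA: "A!i $$ (R div n, R' div n) = cnj (A!i $$ (R' div n, R div n))"
        using i(1) assms(3) b by (intro sa_entry[of _ d]) auto
      have sX: "X!i $$ (R mod n, R' mod n) = cnj (X!i $$ (R' mod n, R mod n))"
        using i(2) assms(4) b by (intro sa_entry[of _ n]) auto
      show "A!i $$ (R div n, R' div n) * X!i $$ (R mod n, R' mod n) =
          cnj (A!i $$ (R' div n, R div n) * X!i $$ (R' mod n, R mod n))"
        by (subst sA, subst sX) simp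
    qed
  qed
  show ?thesis unfolding self_adjoint_def
  proof (intro conjI allI impI)
    show "dim_row (pencil A n X) = dim_col (pencil A n X)" using c by auto
    fix i j assume "i < dim_row (pencil A n X)" "j < dim_row (pencil A n X)"
    then have ij: "i < d*n" "j < d*n" using c by auto
    show "pencil A n X $$ (i, j) = cnj (pencil A n X $$ (j, i))"
      unfolding e[OF ij] e[OF ij(2,1)] S[OF ij] by auto
  qed
qed


lemma psd_pencil:
  assumes "A \<noteq> []" "length A = length X" "\<forall>M\<in>set A. M \<in> carrier_mat d d \<and> self_adjoint M"
    "\<forall>M\<in>set X. M \<in> carrier_mat n n \<and> self_adjoint M"
  shows "psd (pencil A n X) \<longleftrightarrow> (\<forall>f. 0 \<le> Re (Qf (d*n) (\<lambda>R R'. (if R = R' then 1 else 0) - Sfun A X n R R') f))"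
proof -
  note P = pencil_index[OF assms(1,2), of d n]
  have c: "pencil A n X \<in> carrier_mat (d*n) (d*n)" using P assms by auto
  have e: "\<And>R R'. R < d*n \<Longrightarrow> R' < d*n \<Longrightarrow> pencil A n X $$ (R,R') = (if R = R' then 1 else 0) - Sfun A X n R R'"
    using P assms by auto
  have q: "Qf (dim_row (pencil A n X)) (\<lambda>i j. pencil A n X $$ (i,j)) f =
      Qf (d*n) (\<lambda>R R'. (if R = R' then 1 else 0) - Sfun A X n R R') f" for f
    using c unfolding Qf_def by (intro sum.cong refl) (auto simp: e)
  show ?thesis unfolding psd_Qf q using pencil_sa[OF assms] by blast
qed

definition SYM :: "nat \<Rightarrow> complex mat list \<Rightarrow> bool" where
  "SYM d A \<longleftrightarrow> (\<exists>\<pi> \<sigma>. bij_betw \<pi> {..<d} {..<d} \<and> (\<forall>a. \<sigma> a = 1 \<or> \<sigma> a = (-1::complex)) \<and>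
     (\<forall>M\<in>set A. \<forall>a<d. \<forall>a'<d. \<sigma> a * \<sigma> a' * M $$ (\<pi> a, \<pi> a') = - M $$ (a,a')))"

lemma sym_Qf:
  assumes "SYM d A" "length A = length X" "\<forall>M\<in>set A. M \<in> carrier_mat d d"
    "\<forall>M\<in>set X. M \<in> carrier_mat n n"
    and H: "\<forall>f. 0 \<le> Re (Qf (d*n) (\<lambda>R R'. (if R = R' then 1 else 0) - Sfun A X n R R') f)"
  shows "0 \<le> Re (Qf (d*n) (\<lambda>R R'. (if R = R' then 1 else 0) + Sfun A X n R R') f)"
proof (cases "n = 0")
  case True then show ?thesis by (simp add: Qf_def)
next
  case False
  then have n: "n > 0" by simp
  obtain \<pi> \<sigma> where pi: "bij_betw \<pi> {..<d} {..<d}" and sg: "\<forall>a. \<sigma> a = 1 \<or> \<sigma> a = (-1::complex)"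
    and sym: "\<forall>M\<in>set A. \<forall>a<d. \<forall>a'<d. \<sigma> a * \<sigma> a' * M $$ (\<pi> a, \<pi> a') = - M $$ (a,a')"
    using assms(1) unfolding SYM_def by blast
  define \<tau> where "\<tau> R = \<pi> (R div n) * n + R mod n" for R
  define \<rho> where "\<rho> R = \<sigma> (R div n)" for R
  have sq: "\<rho> R * \<rho> R = 1" "cnj (\<rho> R) = \<rho> R" for R using sg[rule_format, of "R div n"] unfolding \<rho>_def by auto
  have pil: "\<pi> a < d" if "a < d" for a using pi that unfolding bij_betw_def by auto
  have tdiv: "\<tau> R div n = \<pi> (R div n)" "\<tau> R mod n = R mod n" for R
    using n unfolding \<tau>_def by auto
  have tlt: "\<tau> R < d*n" if "R < d*n" for R
  proof -
    have "R div n < d" using that by (simp add: less_mult_imp_div_less)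
    then have "\<pi> (R div n) + 1 \<le> d" using pil by (simp add: Suc_le_eq)
    then have "(\<pi> (R div n) + 1) * n \<le> d * n" by (rule mult_right_mono) simp
    moreover have "R mod n < n" using n by simp
    ultimately show ?thesis unfolding \<tau>_def by (simp add: algebra_simps)
  qed
  have tinj: "inj_on \<tau> {..<d*n}"
  proof
    fix R R' assume R: "R \<in> {..<d*n}" "R' \<in> {..<d*n}" and eq: "\<tau> R = \<tau> R'"
    have "R div n < d" "R' div n < d" using R by (auto simp: less_mult_imp_div_less)
    moreover have "\<pi> (R div n) = \<pi> (R' div n)" using tdiv(1)[of R] tdiv(1)[of R'] eq by simp
    ultimately have "R div n = R' div n" using pi unfolding bij_betw_def inj_on_def by blast
    moreover have "R mod n = R' mod n" using tdiv(2)[of R] tdiv(2)[of R'] eq by simp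
    ultimately show "R = R'" by (metis div_mult_mod_eq)
  qed
  have tbij: "bij_betw \<tau> {..<d*n} {..<d*n}"
    unfolding bij_betw_def using tinj endo_inj_surj[of "{..<d*n}" \<tau>] tlt by auto
  let ?S = "Sfun A X n"
  have Sk: "?S (\<tau> R) (\<tau> R') = - (\<rho> R * \<rho> R' * ?S R R')" if R: "R < d*n" "R' < d*n" for R R'
  proof -
    have b: "R div n < d" "R' div n < d" using R by (auto simp: less_mult_imp_div_less)
    have "?S (\<tau> R) (\<tau> R') = (\<Sum>i<length A. A!i $$ (\<pi> (R div n), \<pi> (R' div n)) * X!i $$ (R mod n, R' mod n))"
      unfolding Sfun_def tdiv ..
    also have "\<dots> = (\<Sum>i<length A. - (\<rho> R * \<rho> R' * (A!i $$ (R div n, R' div n) * X!i $$ (R mod n, R' mod n))))"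
    proof (intro sum.cong refl)
      fix i assume "i \<in> {..<length A}"
      then have "A!i \<in> set A" by auto
      then have e: "\<sigma> (R div n) * \<sigma> (R' div n) * A!i $$ (\<pi> (R div n), \<pi> (R' div n)) = - A!i $$ (R div n, R' div n)"
        using sym b by blast
      have "A!i $$ (\<pi> (R div n), \<pi> (R' div n)) = \<rho> R * \<rho> R' * (\<sigma> (R div n) * \<sigma> (R' div n) * A!i $$ (\<pi> (R div n), \<pi> (R' div n)))"
        using sq[of R] sq[of R'] unfolding \<rho>_def by (simp add: algebra_simps)
      also have "\<dots> = - (\<rho> R * \<rho> R' * A!i $$ (R div n, R' div n))" unfolding e by simp
      finally show "A!i $$ (\<pi> (R div n), \<pi> (R' div n)) * X!i $$ (R mod n, R' mod n) = - (\<rho> R * \<rho> R' * (A!i $$ (R div n, R' div n) * X!i $$ (R mod n, R' mod n)))"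
        by simp
    qed
    also have "\<dots> = - (\<rho> R * \<rho> R' * ?S R R')" unfolding Sfun_def sum_negf sum_distrib_left ..
    finally show ?thesis .
  qed
  have Dk: "(if \<tau> R = \<tau> R' then 1 else 0) = \<rho> R * \<rho> R' * (if R = R' then 1 else (0::complex))"
    if R: "R < d*n" "R' < d*n" for R R'
    using tinj R sq(1)[of R] unfolding inj_on_def by auto
  define w where "w R = \<rho> R * f (\<tau> R)" for R
  have "Qf (d*n) (\<lambda>R R'. (if R = R' then 1 else 0) + ?S R R') f =
     (\<Sum>R<d*n. \<Sum>R'<d*n. cnj (f (\<tau> R)) * ((if \<tau> R = \<tau> R' then 1 else 0) + ?S (\<tau> R) (\<tau> R')) * f (\<tau> R'))"
    unfolding Qf_def
  proof -
    let ?G = "\<lambda>i j. cnj (f i) * ((if i = j then 1 else 0) + ?S i j) * f j"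
    have "(\<Sum>i<d*n. \<Sum>j<d*n. ?G i j) = (\<Sum>i<d*n. \<Sum>R'<d*n. ?G i (\<tau> R'))"
      by (rule sum.cong[OF refl]) (rule sum.reindex_bij_betw[OF tbij, symmetric])
    also have "\<dots> = (\<Sum>R<d*n. \<Sum>R'<d*n. ?G (\<tau> R) (\<tau> R'))"
      by (rule sum.reindex_bij_betw[OF tbij, symmetric])
    finally show "(\<Sum>i<d*n. \<Sum>j<d*n. ?G i j) = (\<Sum>R<d*n. \<Sum>R'<d*n. cnj (f (\<tau> R)) * ((if \<tau> R = \<tau> R' then 1 else 0) + ?S (\<tau> R) (\<tau> R')) * f (\<tau> R'))" .
  qed
  also have "\<dots> = Qf (d*n) (\<lambda>R R'. (if R = R' then 1 else 0) - ?S R R') w"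
    unfolding Qf_def
  proof (intro sum.cong refl)
    fix R R' assume R: "R \<in> {..<d*n}" "R' \<in> {..<d*n}"
    then have R: "R < d*n" "R' < d*n" by auto
    show "cnj (f (\<tau> R)) * ((if \<tau> R = \<tau> R' then 1 else 0) + ?S (\<tau> R) (\<tau> R')) * f (\<tau> R') =
      cnj (w R) * ((if R = R' then 1 else 0) - ?S R R') * w R'"
      unfolding Dk[OF R] Sk[OF R] w_def using sq(2)[of R] by (simp add: algebra_simps)
  qed
  finally show ?thesis using H by simp
qed


lemma kron2_index:
  assumes "A \<in> carrier_mat d d" "B \<in> carrier_mat 2 2" "a < d" "a' < d" "s < 2" "s' < 2"
  shows "kron A B $$ (2*a+s, 2*a'+s') = A $$ (a,a') * B $$ (s,s')"
proof -
  have "2*a+s < d*2" "2*a'+s' < d*2" using assms by linarith+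
  then show ?thesis using assms by (simp add: kron_index)
qed

lemma SYM_F: "2 \<le> m \<Longrightarrow> SYM (2^(m-1)) (F m)"
proof (induction m rule: dec_induct)
  case base
  define \<sigma> :: "nat \<Rightarrow> complex" where "\<sigma> a = (if a = 0 then 1 else -1)" for a
  have bij: "bij_betw (\<lambda>a. 1 - a) {..<2::nat} {..<2}"
    unfolding bij_betw_def inj_on_def by (auto simp: image_def) (rule_tac x="1-x" in bexI, auto)
  have "\<forall>M\<in>set (F 2). \<forall>a<2. \<forall>a'<2. \<sigma> a * \<sigma> a' * M $$ (1 - a, 1 - a') = - M $$ (a,a')"
    by (auto simp: numeral_2_eq_2 less_Suc_eq sigma_z_def sigma_x_def mat_of_rows_list_def \<sigma>_def)
  then show ?case unfolding SYM_def using bij by (intro exI[of _ "\<lambda>a. 1 - a"] exI[of _ \<sigma>]) (auto simp: \<sigma>_def)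
next
  case (step m)
  define d where "d = (2::nat)^(m-1)"
  have p: "2^(Suc m - 1) = d*(2::nat)" using step(1) unfolding d_def by (cases m) auto
  have FP: "length (F m) = m" "F m \<noteq> []" "\<forall>M\<in>set (F m). M \<in> carrier_mat d d \<and> self_adjoint M"
    using F_props[OF step(1)] unfolding d_def by auto
  have hd: "dim_row (hd (F m)) = d" using FP by (cases "F m") auto
  obtain \<pi> \<sigma> where pi: "bij_betw \<pi> {..<d} {..<d}" and sg: "\<forall>a. \<sigma> a = 1 \<or> \<sigma> a = (-1::complex)"
    and sym: "\<forall>M\<in>set (F m). \<forall>a<d. \<forall>a'<d. \<sigma> a * \<sigma> a' * M $$ (\<pi> a, \<pi> a') = - M $$ (a,a')"
    using step(3) unfolding SYM_def d_def[symmetric] by (elim exE conjE) blast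
  have pil: "\<pi> a < d" if "a < d" for a using pi that unfolding bij_betw_def by auto
  define \<pi>' where "\<pi>' r = 2 * \<pi> (r div 2) + r mod 2" for r
  define \<sigma>' :: "nat \<Rightarrow> complex" where "\<sigma>' r = \<sigma> (r div 2) * (if r mod 2 = 0 then 1 else -1)" for r
  have pdiv: "\<pi>' r div 2 = \<pi> (r div 2)" "\<pi>' r mod 2 = r mod 2" for r unfolding \<pi>'_def by auto
  have plt: "\<pi>' r < d*2" if "r < d*2" for r
  proof -
    have "r div 2 < d" using that by auto
    then have "\<pi> (r div 2) < d" by (rule pil)
    then show ?thesis unfolding \<pi>'_def by linarith
  qed
  have pinj: "inj_on \<pi>' {..<d*2}"
  proof
    fix r r' assume R: "r \<in> {..<d*2}" "r' \<in> {..<d*2}" and eq: "\<pi>' r = \<pi>' r'"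
    have "r div 2 < d" "r' div 2 < d" using R by auto
    moreover have "\<pi> (r div 2) = \<pi> (r' div 2)" using pdiv(1)[of r] pdiv(1)[of r'] eq by simp
    ultimately have "r div 2 = r' div 2" using pi unfolding bij_betw_def inj_on_def by blast
    moreover have "r mod 2 = r' mod 2" using pdiv(2)[of r] pdiv(2)[of r'] eq by simp
    ultimately show "r = r'" by (metis div_mod_decomp)
  qed
  have pbij: "bij_betw \<pi>' {..<d*2} {..<d*2}"
    unfolding bij_betw_def using pinj endo_inj_surj[of "{..<d*2}" \<pi>'] plt by auto
  have sg': "\<forall>a. \<sigma>' a = 1 \<or> \<sigma>' a = (-1::complex)"
  proof
    fix r
    have "\<sigma> (r div 2) = 1 \<or> \<sigma> (r div 2) = -1" using sg by blast
    then show "\<sigma>' r = 1 \<or> \<sigma>' r = -1" unfolding \<sigma>'_def by auto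
  qed
  have "\<forall>M\<in>set (F (Suc m)). \<forall>r<d*2. \<forall>r'<d*2. \<sigma>' r * \<sigma>' r' * M $$ (\<pi>' r, \<pi>' r') = - M $$ (r,r')"
  proof (intro ballI allI impI)
    fix M r r' assume M: "M \<in> set (F (Suc m))" and r: "r < d*2" "r' < d*2"
    define a where "a = r div 2" define a' where "a' = r' div 2"
    define s where "s = r mod 2" define s' where "s' = r' mod 2"
    have ab: "a < d" "a' < d" "s < 2" "s' < 2" using r unfolding a_def a'_def s_def s'_def by auto
    have rr: "r = 2*a+s" "r' = 2*a'+s'" unfolding a_def a'_def s_def s'_def by auto
    have pr: "\<pi>' r = 2*\<pi> a + s" "\<pi>' r' = 2*\<pi> a' + s'" unfolding \<pi>'_def a_def a'_def s_def s'_def by auto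
    have sr: "\<sigma>' r = \<sigma> a * (if s = 0 then 1 else -1)" "\<sigma>' r' = \<sigma> a' * (if s' = 0 then 1 else -1)"
      unfolding \<sigma>'_def a_def a'_def s_def s'_def by auto
    have sq: "\<sigma> a * \<sigma> a = 1" using sg by (metis mult_1_left mult_minus1 minus_minus)
    note sz = sigma_carrier
    from M consider (a) A where "A \<in> set (F m)" "M = kron A sigma_z" | (b) "M = kron (1\<^sub>m d) sigma_x"
      using F_step[OF step(1)] hd by auto
    then show "\<sigma>' r * \<sigma>' r' * M $$ (\<pi>' r, \<pi>' r') = - M $$ (r,r')"
    proof cases
      case a
      have A: "A \<in> carrier_mat d d" using a FP by auto
      have e1: "M $$ (\<pi>' r, \<pi>' r') = A $$ (\<pi> a, \<pi> a') * sigma_z $$ (s,s')"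
        unfolding pr a(2) using kron2_index[OF A sz(1) pil pil] ab by auto
      have e2: "M $$ (r, r') = A $$ (a, a') * sigma_z $$ (s,s')"
        unfolding rr a(2) using kron2_index[OF A sz(1)] ab by auto
      have e3: "\<sigma> a * \<sigma> a' * A $$ (\<pi> a, \<pi> a') = - A $$ (a,a')" using sym a(1) ab by blast
      show ?thesis unfolding e1 e2 sr using ab e3
        by (cases "s = s'") (auto simp: sigma_z_index algebra_simps)
    next
      case b
      have I: "1\<^sub>m d \<in> carrier_mat d d" by simp
      have e1: "M $$ (\<pi>' r, \<pi>' r') = 1\<^sub>m d $$ (\<pi> a, \<pi> a') * sigma_x $$ (s,s')"
        unfolding pr b using kron2_index[OF I sz(2) pil pil] ab by auto
      have e2: "M $$ (r, r') = 1\<^sub>m d $$ (a, a') * sigma_x $$ (s,s')"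
        unfolding rr b using kron2_index[OF I sz(2)] ab by auto
      have pe: "(\<pi> a = \<pi> a') = (a = a')" using pi ab unfolding bij_betw_def inj_on_def by auto
      have ss: "s = 0 \<or> s = 1" "s' = 0 \<or> s' = 1" using ab by auto
      show ?thesis unfolding e1 e2 sr using ab pil pe sq ss
        by (auto simp: sigma_x_index algebra_simps)
    qed
  qed
  note X = this
  show ?case unfolding SYM_def p
    by (rule exI[of _ \<pi>'], rule exI[of _ \<sigma>'], intro conjI pbij sg' X)
qed


definition phi :: "nat \<Rightarrow> nat \<Rightarrow> nat \<Rightarrow> nat" where
  "phi n R0 s = (2*(R0 div n) + s)*n + R0 mod n"

lemma phi_div: "n > 0 \<Longrightarrow> s < 2 \<Longrightarrow> phi n R0 s div n = 2*(R0 div n) + s \<and> phi n R0 s mod n = R0 mod n"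
  unfolding phi_def by simp

lemma phi_lt: assumes "n > 0" "R0 < d*n" "s < 2" shows "phi n R0 s < d*2*n"
proof -
  have "R0 div n < d" using assms by (simp add: less_mult_imp_div_less)
  then have "2*(R0 div n) + s + 1 \<le> d*2" using assms(3) by linarith
  then have "(2*(R0 div n) + s + 1) * n \<le> d*2*n" by (rule mult_right_mono) simp
  moreover have "R0 mod n < n" using assms by simp
  ultimately show ?thesis unfolding phi_def by (simp add: algebra_simps)
qed

lemma phi_eq: assumes "n > 0" "s < 2" "t < 2"
  shows "(phi n a s = phi n b t) \<longleftrightarrow> (a = b \<and> s = t)"
proof
  assume e: "phi n a s = phi n b t"
  have "2*(a div n) + s = 2*(b div n) + t" "a mod n = b mod n"
    using phi_div[OF assms(1,2), of a] phi_div[OF assms(1,3), of b] e by auto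
  moreover have "s = t"
  proof -
    have "(2*(a div n) + s) mod 2 = s" "(2*(b div n) + t) mod 2 = t" using assms(2,3) by simp_all
    then show ?thesis using calculation(1) by metis
  qed
  ultimately show "a = b \<and> s = t" by (metis div_mod_decomp add_right_cancel mult_cancel_left zero_neq_numeral)
qed simp

lemma phi_bij: assumes "n > 0"
  shows "bij_betw (\<lambda>(R0,s). phi n R0 s) ({..<d*n} \<times> {..<2}) {..<d*2*n}"
  unfolding bij_betw_def
proof
  show "inj_on (\<lambda>(R0,s). phi n R0 s) ({..<d*n} \<times> {..<2})"
    using phi_eq[OF assms] unfolding inj_on_def by auto
  show "(\<lambda>(R0,s). phi n R0 s) ` ({..<d*n} \<times> {..<2}) = {..<d*2*n}"
  proof
    show "(\<lambda>(R0,s). phi n R0 s) ` ({..<d*n} \<times> {..<2}) \<subseteq> {..<d*2*n}"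
      using phi_lt[OF assms] by auto
    show "{..<d*2*n} \<subseteq> (\<lambda>(R0,s). phi n R0 s) ` ({..<d*n} \<times> {..<2})"
    proof
      fix R assume R: "R \<in> {..<d*2*n}"
      define R0 where "R0 = (R div n div 2)*n + R mod n"
      define s where "s = R div n mod 2"
      have "R div n < d*2" using R by (auto simp: less_mult_imp_div_less)
      then have q: "R div n div 2 < d" by auto
      have md: "R mod n < n" using assms by simp
      have "R0 < d*n"
      proof -
        have "R div n div 2 + 1 \<le> d" using q by simp
        then have "(R div n div 2 + 1)*n \<le> d*n" by (rule mult_right_mono) simp
        then show ?thesis unfolding R0_def using md by (simp add: algebra_simps)
      qed
      moreover have "s < 2" unfolding s_def by simp
      moreover have "phi n R0 s = R"
      proof -
        have "R0 div n = R div n div 2" "R0 mod n = R mod n" unfolding R0_def using md assms by auto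
        then have "phi n R0 s = (2*(R div n div 2) + R div n mod 2)*n + R mod n" unfolding phi_def s_def by simp
        also have "\<dots> = (R div n)*n + R mod n" by presburger
        also have "\<dots> = R" by simp
        finally show ?thesis .
      qed
      ultimately show "R \<in> (\<lambda>(R0,s). phi n R0 s) ` ({..<d*n} \<times> {..<2})" by force
    qed
  qed
qed

lemma split_sum: assumes "n > 0"
  shows "(\<Sum>R<d*2*n. h R) = (\<Sum>R0<d*n. h (phi n R0 0)) + (\<Sum>R0<d*n. h (phi n R0 1))"
proof -
  have "(\<Sum>R<d*2*n. h R) = (\<Sum>x\<in>{..<d*n} \<times> {..<2}. h ((\<lambda>(R0,s). phi n R0 s) x))"
    by (rule sum.reindex_bij_betw[OF phi_bij[OF assms], symmetric])
  also have "\<dots> = (\<Sum>R0<d*n. \<Sum>s<2. h (phi n R0 s))"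
    by (simp add: sum.cartesian_product split_beta)
  also have "\<dots> = (\<Sum>R0<d*n. h (phi n R0 0) + h (phi n R0 1))"
    by (simp add: numeral_2_eq_2)
  finally show ?thesis by (simp add: sum.distrib)
qed

definition Bf :: "nat \<Rightarrow> nat \<Rightarrow> (nat \<Rightarrow> nat \<Rightarrow> complex) \<Rightarrow> (nat \<Rightarrow> complex) \<Rightarrow> nat \<Rightarrow> nat \<Rightarrow> complex" where
  "Bf N n K f s t = (\<Sum>a<N. \<Sum>b<N. cnj (f (phi n a s)) * K (phi n a s) (phi n b t) * f (phi n b t))"

lemma Qf_split: assumes "n > 0"
  shows "Qf (d*2*n) K f = Bf (d*n) n K f 0 0 + Bf (d*n) n K f 0 1 + Bf (d*n) n K f 1 0 + Bf (d*n) n K f 1 1"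
proof -
  have "Qf (d*2*n) K f = (\<Sum>R<d*2*n. (\<Sum>b<d*n. cnj (f R) * K R (phi n b 0) * f (phi n b 0))
       + (\<Sum>b<d*n. cnj (f R) * K R (phi n b 1) * f (phi n b 1)))"
    unfolding Qf_def by (rule sum.cong[OF refl]) (rule split_sum[OF assms])
  also have "\<dots> = Bf (d*n) n K f 0 0 + Bf (d*n) n K f 0 1 + Bf (d*n) n K f 1 0 + Bf (d*n) n K f 1 1"
    unfolding split_sum[OF assms] Bf_def by (simp add: sum.distrib)
  finally show ?thesis .
qed


lemma Sfun_step:
  assumes m: "2 \<le> m" and lX: "length X = m" and n: "n > 0" and ab: "a < 2^(m-1)*n" "b < 2^(m-1)*n"
    and st: "s < 2" "t < 2"
  shows "Sfun (F (Suc m)) (X@[Y]) n (phi n a s) (phi n b t) =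
     sigma_z $$ (s,t) * Sfun (F m) X n a b +
     (if a div n = b div n then sigma_x $$ (s,t) * Y $$ (a mod n, b mod n) else 0)"
proof -
  define d where "d = (2::nat)^(m-1)"
  have FP: "length (F m) = m" "F m \<noteq> []" "\<forall>M\<in>set (F m). M \<in> carrier_mat d d \<and> self_adjoint M"
    using F_props[OF m] unfolding d_def by auto
  have hd: "dim_row (hd (F m)) = d" using FP by (cases "F m") auto
  have FS: "F (Suc m) = map (\<lambda>M. kron M sigma_z) (F m) @ [kron (1\<^sub>m d) sigma_x]"
    using F_step[OF m] hd by simp
  have ad: "a div n < d" "b div n < d" using ab unfolding d_def by (auto simp: less_mult_imp_div_less)
  have pd: "phi n a s div n = 2*(a div n) + s" "phi n a s mod n = a mod n"
     "phi n b t div n = 2*(b div n) + t" "phi n b t mod n = b mod n"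
    using phi_div[OF n] st by auto
  have I: "1\<^sub>m d \<in> carrier_mat d d" by simp
  have "Sfun (F (Suc m)) (X@[Y]) n (phi n a s) (phi n b t) =
    (\<Sum>i<m. F (Suc m)!i $$ (2*(a div n) + s, 2*(b div n) + t) * (X@[Y])!i $$ (a mod n, b mod n)) +
     F (Suc m)!m $$ (2*(a div n) + s, 2*(b div n) + t) * (X@[Y])!m $$ (a mod n, b mod n)"
    unfolding Sfun_def pd using FP(1) FS by simp
  also have "(\<Sum>i<m. F (Suc m)!i $$ (2*(a div n) + s, 2*(b div n) + t) * (X@[Y])!i $$ (a mod n, b mod n))
     = (\<Sum>i<m. sigma_z $$ (s,t) * ((F m)!i $$ (a div n, b div n) * X!i $$ (a mod n, b mod n)))"
  proof (rule sum.cong[OF refl])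
    fix i assume i: "i \<in> {..<m}"
    then have Fi: "F (Suc m)!i = kron (F m!i) sigma_z" "(X@[Y])!i = X!i" using FS FP(1) lX by (auto simp: nth_append)
    have "F m!i \<in> carrier_mat d d" using FP i by auto
    then show "F (Suc m)!i $$ (2*(a div n) + s, 2*(b div n) + t) * (X@[Y])!i $$ (a mod n, b mod n) =
      sigma_z $$ (s,t) * ((F m)!i $$ (a div n, b div n) * X!i $$ (a mod n, b mod n))"
      unfolding Fi using kron2_index[OF _ sigma_carrier(1) ad st] by simp
  qed
  also have "\<dots> = sigma_z $$ (s,t) * Sfun (F m) X n a b"
    unfolding Sfun_def FP(1) sum_distrib_left ..
  also have "F (Suc m)!m $$ (2*(a div n) + s, 2*(b div n) + t) * (X@[Y])!m $$ (a mod n, b mod n) =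
     (if a div n = b div n then sigma_x $$ (s,t) * Y $$ (a mod n, b mod n) else 0)"
  proof -
    have Fm: "F (Suc m)!m = kron (1\<^sub>m d) sigma_x" "(X@[Y])!m = Y" using FS FP(1) lX by (auto simp: nth_append)
    show ?thesis unfolding Fm using kron2_index[OF I sigma_carrier(2) ad st] ad by simp
  qed
  finally show ?thesis .
qed


lemma step_restrict:
  assumes m: "2 \<le> m" and lX: "length X = m" and n: "n > 0"
    and H: "\<forall>f. 0 \<le> Re (Qf (2^(m-1)*2*n) (\<lambda>R R'. (if R = R' then 1 else 0) - Sfun (F (Suc m)) (X@[Y]) n R R') f)"
  shows "0 \<le> Re (Qf (2^(m-1)*n) (\<lambda>R R'. (if R = R' then 1 else 0) - Sfun (F m) X n R R') f0)"
proof -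
  define d where "d = (2::nat)^(m-1)"
  define K where "K = (\<lambda>R R'. (if R = R' then 1 else 0) - Sfun (F (Suc m)) (X@[Y]) n R R')"
  define f where "f R = (if (R div n) mod 2 = 0 then f0 ((R div n div 2)*n + R mod n) else 0)" for R
  have f1: "f (phi n a 1) = 0" for a using phi_div[OF n, of 1 a] unfolding f_def by simp
  have f0: "f (phi n a 0) = f0 a" for a using phi_div[OF n, of 0 a] unfolding f_def by simp
  have z: "Bf (d*n) n K f 0 1 = 0" "Bf (d*n) n K f 1 0 = 0" "Bf (d*n) n K f 1 1 = 0"
    unfolding Bf_def f1 by simp_all
  have "Bf (d*n) n K f 0 0 = Qf (d*n) (\<lambda>R R'. (if R = R' then 1 else 0) - Sfun (F m) X n R R') f0"
    unfolding Bf_def Qf_def f0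
  proof (intro sum.cong refl)
    fix a b assume ab: "a \<in> {..<d*n}" "b \<in> {..<d*n}"
    have "K (phi n a 0) (phi n b 0) = (if a = b then 1 else 0) - Sfun (F m) X n a b"
      unfolding K_def using Sfun_step[OF m lX n, of a b 0 0 Y] ab phi_eq[OF n, of 0 0 a b]
      by (simp add: d_def sigma_z_index sigma_x_index)
    then show "cnj (f0 a) * K (phi n a 0) (phi n b 0) * f0 b =
      cnj (f0 a) * ((if a = b then 1 else 0) - Sfun (F m) X n a b) * f0 b" by simp
  qed
  then have "Qf (d*2*n) K f = Qf (d*n) (\<lambda>R R'. (if R = R' then 1 else 0) - Sfun (F m) X n R R') f0"
    unfolding Qf_split[OF n] z by simp
  moreover have "0 \<le> Re (Qf (d*2*n) K f)" using H unfolding K_def d_def by (rule spec)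
  ultimately show ?thesis unfolding d_def by simp
qed

lemma step_extend:
  assumes m: "2 \<le> m" and lX: "length X = m" and n: "n > 0"
    and XC: "\<forall>M\<in>set X. M \<in> carrier_mat n n"
    and H: "\<forall>f. 0 \<le> Re (Qf (2^(m-1)*n) (\<lambda>R R'. (if R = R' then 1 else 0) - Sfun (F m) X n R R') f)"
  shows "0 \<le> Re (Qf (2^(m-1)*2*n) (\<lambda>R R'. (if R = R' then 1 else 0) - Sfun (F (Suc m)) (X@[0\<^sub>m n n]) n R R') f)"
proof -
  define d where "d = (2::nat)^(m-1)"
  define K where "K = (\<lambda>R R'. (if R = R' then 1 else 0) - Sfun (F (Suc m)) (X@[0\<^sub>m n n]) n R R')"
  have FP: "length (F m) = m" "\<forall>M\<in>set (F m). M \<in> carrier_mat d d"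
    using F_props[OF m] unfolding d_def by auto
  have Ke: "K (phi n a s) (phi n b t) = (if a = b \<and> s = t then 1 else 0) - sigma_z $$ (s,t) * Sfun (F m) X n a b"
    if ab: "a < d*n" "b < d*n" and st: "s < 2" "t < 2" for a b s t
  proof -
    have "a mod n < n" "b mod n < n" using n by auto
    then show ?thesis
      unfolding K_def using Sfun_step[OF m lX n, of a b s t "0\<^sub>m n n"] ab st phi_eq[OF n st, of a b]
      by (simp add: d_def)
  qed
  have z: "Bf (d*n) n K f 0 1 = 0" "Bf (d*n) n K f 1 0 = 0"
    unfolding Bf_def by (intro sum.neutral ballI, simp add: Ke sigma_z_index)+
  have b0: "Bf (d*n) n K f 0 0 = Qf (d*n) (\<lambda>R R'. (if R = R' then 1 else 0) - Sfun (F m) X n R R') (\<lambda>a. f (phi n a 0))"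
    unfolding Bf_def Qf_def by (intro sum.cong refl) (simp add: Ke sigma_z_index)
  have b1: "Bf (d*n) n K f 1 1 = Qf (d*n) (\<lambda>R R'. (if R = R' then 1 else 0) + Sfun (F m) X n R R') (\<lambda>a. f (phi n a 1))"
    unfolding Bf_def Qf_def by (intro sum.cong refl) (simp add: Ke sigma_z_index)
  have "0 \<le> Re (Qf (d*n) (\<lambda>R R'. (if R = R' then 1 else 0) + Sfun (F m) X n R R') (\<lambda>a. f (phi n a 1)))"
    by (rule sym_Qf[OF SYM_F[OF m, folded d_def] _ FP(2) XC]) (use FP(1) lX H d_def in auto)
  moreover have "0 \<le> Re (Qf (d*n) (\<lambda>R R'. (if R = R' then 1 else 0) - Sfun (F m) X n R R') (\<lambda>a. f (phi n a 0)))"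
    using H d_def by auto
  ultimately have "0 \<le> Re (Qf (d*2*n) K f)"
    unfolding Qf_split[OF n] z b0 b1 by simp
  then show ?thesis unfolding K_def d_def .
qed


lemma psd_F:
  assumes m: "2 \<le> m" and X: "SM_tuple n m X"
  shows "psd (pencil (F m) n X) \<longleftrightarrow>
    (\<forall>f. 0 \<le> Re (Qf (2^(m-1)*n) (\<lambda>R R'. (if R = R' then 1 else 0) - Sfun (F m) X n R R') f))"
proof -
  have FP: "length (F m) = m" "F m \<noteq> []" "\<forall>M\<in>set (F m). M \<in> carrier_mat (2^(m-1)) (2^(m-1)) \<and> self_adjoint M"
    using F_props[OF m] by auto
  show ?thesis
    by (rule psd_pencil) (use FP X in \<open>auto simp: SM_tuple_def\<close>)
qed

lemma SM_snoc: "SM_tuple n m X \<Longrightarrow> Y \<in> carrier_mat n n \<Longrightarrow> self_adjoint Y \<Longrightarrow> SM_tuple n (Suc m) (X@[Y])"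
  unfolding SM_tuple_def by auto

lemma zero_sa: "self_adjoint (0\<^sub>m n n :: complex mat)"
  unfolding self_adjoint_def by simp

lemma L_ext:
  assumes m: "2 \<le> m" and X: "SM_tuple n m X" and P: "psd (pencil (F m) n X)"
  shows "psd (pencil (F (Suc m)) n (X@[0\<^sub>m n n]))"
proof -
  have X': "SM_tuple n (Suc m) (X@[0\<^sub>m n n])" by (rule SM_snoc[OF X _ zero_sa]) simp
  have m': "2 \<le> Suc m" using m by simp
  have e: "(2::nat)^(Suc m - 1) * n = 2^(m-1)*2*n" using m by (cases m) auto
  show ?thesis unfolding psd_F[OF m' X'] e
  proof
    fix f
    show "0 \<le> Re (Qf (2^(m-1)*2*n) (\<lambda>R R'. (if R = R' then 1 else 0) - Sfun (F (Suc m)) (X@[0\<^sub>m n n]) n R R') f)"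
    proof (cases "n = 0")
      case True then show ?thesis by (simp add: Qf_def)
    next
      case False
      show ?thesis
        by (rule step_extend[OF m]) (use X P psd_F[OF m X] False in \<open>auto simp: SM_tuple_def\<close>)
    qed
  qed
qed

lemma L_res:
  assumes m: "2 \<le> m" and X: "SM_tuple n m X" and Y: "Y \<in> carrier_mat n n" "self_adjoint Y"
    and P: "psd (pencil (F (Suc m)) n (X@[Y]))"
  shows "psd (pencil (F m) n X)"
proof -
  have X': "SM_tuple n (Suc m) (X@[Y])" by (rule SM_snoc[OF X Y])
  have m': "2 \<le> Suc m" using m by simp
  have e: "(2::nat)^(Suc m - 1) * n = 2^(m-1)*2*n" using m by (cases m) auto
  have H: "\<forall>f. 0 \<le> Re (Qf (2^(m-1)*2*n) (\<lambda>R R'. (if R = R' then 1 else 0) - Sfun (F (Suc m)) (X@[Y]) n R R') f)"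
    using P unfolding psd_F[OF m' X'] e .
  show ?thesis unfolding psd_F[OF m X]
  proof
    fix f
    show "0 \<le> Re (Qf (2^(m-1)*n) (\<lambda>R R'. (if R = R' then 1 else 0) - Sfun (F m) X n R R') f)"
    proof (cases "n = 0")
      case True then show ?thesis by (simp add: Qf_def)
    next
      case False
      show ?thesis
        by (rule step_restrict[OF m _ _ H]) (use X False in \<open>auto simp: SM_tuple_def\<close>)
    qed
  qed
qed

lemma SM_append_rep: "SM_tuple n g X \<Longrightarrow> SM_tuple n (g+k) (X @ replicate k (0\<^sub>m n n))"
  unfolding SM_tuple_def using zero_sa by auto

lemma Ind1:
  assumes g: "2 \<le> g" and X: "SM_tuple n g X"
  shows "psd (pencil (F (g+k)) n (X @ replicate k (0\<^sub>m n n))) \<longleftrightarrow> psd (pencil (F g) n X)"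
proof (induction k)
  case 0 then show ?case by simp
next
  case (Suc k)
  have m: "2 \<le> g + k" using g by simp
  have X': "SM_tuple n (g+k) (X @ replicate k (0\<^sub>m n n))" by (rule SM_append_rep[OF X])
  have eq: "X @ replicate (Suc k) (0\<^sub>m n n) = (X @ replicate k (0\<^sub>m n n)) @ [0\<^sub>m n n]"
    by (simp add: replicate_append_same[symmetric])
  show ?case unfolding eq add_Suc_right
    using L_ext[OF m X'] L_res[OF m X' zero_carrier_mat zero_sa[of n]] Suc.IH by auto
qed

lemma Ind2:
  assumes g: "2 \<le> g" and X: "SM_tuple n g X"
  shows "SM_tuple n k Y \<Longrightarrow> psd (pencil (F (g+k)) n (X @ Y)) \<Longrightarrow> psd (pencil (F g) n X)"
proof (induction Y arbitrary: k rule: rev_induct)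
  case Nil then show ?case by (simp add: SM_tuple_def)
next
  case (snoc y Y)
  obtain k' where k: "k = Suc k'" using snoc.prems by (cases k) (auto simp: SM_tuple_def)
  have Y: "SM_tuple n k' Y" "y \<in> carrier_mat n n" "self_adjoint y"
    using snoc.prems k by (auto simp: SM_tuple_def)
  have XY: "SM_tuple n (g+k') (X @ Y)" using X Y(1) by (auto simp: SM_tuple_def)
  have m: "2 \<le> g + k'" using g by simp
  have "psd (pencil (F (Suc (g+k'))) n ((X @ Y) @ [y]))" using snoc.prems k by simp
  then have "psd (pencil (F (g+k')) n (X @ Y))" by (rule L_res[OF m XY Y(2,3)])
  then show ?case using snoc.IH[OF Y(1)] by simp
qed

lemma SM_unique: "SM_tuple n g X \<Longrightarrow> SM_tuple n' g' X \<Longrightarrow> X \<noteq> [] \<Longrightarrow> n = n'"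
  unfolding SM_tuple_def by (cases X) auto

lemma freeSpec_F: "2 \<le> m \<Longrightarrow> X \<in> freeSpec (F m) \<longleftrightarrow> (\<exists>n. SM_tuple n m X \<and> psd (pencil (F m) n X))"
  unfolding freeSpec_def using F_props[of m] by auto

theorem mainTheorem5:
  fixes g h :: nat
  assumes "2 \<le> g" and "g < h"
  shows "(\<forall>n X. SM_tuple n g X \<longrightarrow>
            (X \<in> freeSpec (F g) \<longleftrightarrow> X @ replicate (h - g) (0\<^sub>m n n) \<in> freeSpec (F h)))
         \<and> proj g h (freeSpec (F h)) = freeSpec (F g)"
proof -
  have h2: "2 \<le> h" using assms by simp
  have hk: "h = g + (h - g)" using assms by simp
  have ne: "X \<noteq> []" if "SM_tuple n g X" for n X using that assms(1) by (auto simp: SM_tuple_def)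
  have A: "X \<in> freeSpec (F g) \<longleftrightarrow> X @ replicate (h - g) (0\<^sub>m n n) \<in> freeSpec (F h)"
    if X: "SM_tuple n g X" for n X
  proof -
    have XR: "SM_tuple n h (X @ replicate (h - g) (0\<^sub>m n n))" using SM_append_rep[OF X, of "h-g"] hk by simp
    have "X \<in> freeSpec (F g) \<longleftrightarrow> psd (pencil (F g) n X)"
      unfolding freeSpec_F[OF assms(1)] using SM_unique[OF X _ ne[OF X]] X by metis
    also have "\<dots> \<longleftrightarrow> psd (pencil (F h) n (X @ replicate (h - g) (0\<^sub>m n n)))"
      using Ind1[OF assms(1) X, of "h-g"] hk by simp
    also have "\<dots> \<longleftrightarrow> X @ replicate (h - g) (0\<^sub>m n n) \<in> freeSpec (F h)"
      unfolding freeSpec_F[OF h2] using SM_unique[OF XR _] XR ne[OF X] by (metis append_is_Nil_conv)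
    finally show ?thesis .
  qed
  have B: "proj g h (freeSpec (F h)) = freeSpec (F g)"
  proof
    show "proj g h (freeSpec (F h)) \<subseteq> freeSpec (F g)"
    proof
      fix X assume "X \<in> proj g h (freeSpec (F h))"
      then obtain n Y where X: "SM_tuple n g X" and Y: "SM_tuple n (h-g) Y" and XY: "X @ Y \<in> freeSpec (F h)"
        unfolding proj_def by blast
      obtain n' where n': "SM_tuple n' h (X@Y)" "psd (pencil (F h) n' (X@Y))"
        using XY unfolding freeSpec_F[OF h2] by blast
      have "SM_tuple n' g X" using n'(1) X by (auto simp: SM_tuple_def)
      then have "n' = n" using SM_unique[OF X _ ne[OF X]] by simp
      then have "psd (pencil (F (g + (h-g))) n (X@Y))" using n'(2) hk by simp
      then have "psd (pencil (F g) n X)" by (rule Ind2[OF assms(1) X Y])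
      then show "X \<in> freeSpec (F g)" unfolding freeSpec_F[OF assms(1)] using X by blast
    qed
    show "freeSpec (F g) \<subseteq> proj g h (freeSpec (F h))"
    proof
      fix X assume XF: "X \<in> freeSpec (F g)"
      then obtain n where X: "SM_tuple n g X" unfolding freeSpec_F[OF assms(1)] by blast
      have "X @ replicate (h - g) (0\<^sub>m n n) \<in> freeSpec (F h)" using A[OF X] XF by blast
      moreover have "SM_tuple n (h-g) (replicate (h - g) (0\<^sub>m n n))"
        unfolding SM_tuple_def using zero_sa by auto
      ultimately show "X \<in> proj g h (freeSpec (F h))" unfolding proj_def using X by blast
    qed
  qed
  show ?thesis using A B by blast
qed

end
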